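(* Let $M_k$ be a Bott tower with non-negative Bott numbers $c_{i,j}\ge 0$. Every nef and big divisor on $M_k$ is ample if and only if $c_{i,j}=0$ for all $1\le i<j\le k$.
   Context: Given integers $c_{i,j}$ ($1\le i<j\le k$) (Bott numbers), let $e_1,\dots,e_k$ be the standard basis of $\mathbb{Z}^k$. The Bott tower $M_k$ is the nonsingular projective toric variety whose fan has the $2k$ rays generated by $v_i=e_i$ ($1\le i\le k$), $v_{k+i}=-e_i+c_{i,i+1}e_{i+1}+\cdots+c_{i,k}e_k$ ($1\le i\le k-1$), $v_{2k}=-e_k$, and whose maximal cones are the $2^k$ cones generated by $k$ of these vectors containing, for each $i$, exactly one of $v_i,v_{k+i}$. *)

theory Defs
  imports Complex_Main
begin

text \<open>Rays are indexed by 1..2k; vectors in Z^k are functions nat => int on coordinates 1..k.\<close>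

definition bott_ray :: "(nat \<Rightarrow> nat \<Rightarrow> int) \<Rightarrow> nat \<Rightarrow> nat \<Rightarrow> nat \<Rightarrow> int" where
  "bott_ray c k i j =
     (if i \<le> k then (if j = i then 1 else 0)
      else (let l = i - k in
            if j = l then -1 else if l < j \<and> j \<le> k then c l j else 0))"

text \<open>Maximal cone indexed by S subset {1..k}: uses v_(k+i) for i in S and v_i for i not in S.\<close>
definition bott_cone :: "nat \<Rightarrow> nat set \<Rightarrow> nat set" where
  "bott_cone k S = ({1..k} - S) \<union> ((\<lambda>i. k + i) ` S)"

definition bott_pair :: "(nat \<Rightarrow> nat \<Rightarrow> int) \<Rightarrow> nat \<Rightarrow> (nat \<Rightarrow> real) \<Rightarrow> nat \<Rightarrow> real" where
  "bott_pair c k m i = (\<Sum>j = 1..k. m j * of_int (bott_ray c k i j))"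

text \<open>A torus-invariant divisor D = sum_(i=1..2k) a i D_i (every divisor class has such a
  representative). Nef / ample: the (Cartier) support function is convex / strictly convex;
  i.e. for every maximal cone sigma the local datum m_sigma (with <m_sigma,v_i> = -a_i for
  v_i in sigma) satisfies <m_sigma,v_i> >= -a_i (resp. > -a_i for v_i not in sigma) for all rays.
  Big: the polytope P_D = {m. <m,v_i> >= -a_i for all i} is full-dimensional.\<close>

definition bott_nef :: "(nat \<Rightarrow> nat \<Rightarrow> int) \<Rightarrow> nat \<Rightarrow> (nat \<Rightarrow> int) \<Rightarrow> bool" where
  "bott_nef c k a \<longleftrightarrow> (\<forall>S\<subseteq>{1..k}. \<exists>m.
      (\<forall>i\<in>bott_cone k S. bott_pair c k m i = - of_int (a i)) \<and>
      (\<forall>i\<in>{1..2*k}. bott_pair c k m i \<ge> - of_int (a i)))"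

definition bott_ample :: "(nat \<Rightarrow> nat \<Rightarrow> int) \<Rightarrow> nat \<Rightarrow> (nat \<Rightarrow> int) \<Rightarrow> bool" where
  "bott_ample c k a \<longleftrightarrow> (\<forall>S\<subseteq>{1..k}. \<exists>m.
      (\<forall>i\<in>bott_cone k S. bott_pair c k m i = - of_int (a i)) \<and>
      (\<forall>i\<in>{1..2*k} - bott_cone k S. bott_pair c k m i > - of_int (a i)))"

definition bott_big :: "(nat \<Rightarrow> nat \<Rightarrow> int) \<Rightarrow> nat \<Rightarrow> (nat \<Rightarrow> int) \<Rightarrow> bool" where
  "bott_big c k a \<longleftrightarrow> (\<exists>m. \<forall>i\<in>{1..2*k}. bott_pair c k m i > - of_int (a i))"

end

theory Submission
  imports Defs
begin

lemma pair_low: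
  assumes "1 \<le> i" "i \<le> k"
  shows "bott_pair c k m i = m i"
proof -
  have "bott_pair c k m i = (\<Sum>j = 1..k. if j = i then m j else 0)"
    unfolding bott_pair_def bott_ray_def using assms by (intro sum.cong) auto
  also have "\<dots> = m i" using assms by (simp add: sum.delta)
  finally show ?thesis .
qed

lemma pair_high:
  assumes "1 \<le> l" "l \<le> k"
  shows "bott_pair c k m (k + l) = - m l + (\<Sum>j\<in>{l<..k}. m j * of_int (c l j))"
proof -
  have "bott_pair c k m (k + l) = (\<Sum>j = 1..k. (if j = l then - m j else 0)
          + (if l < j then m j * of_int (c l j) else 0))"
    unfolding bott_pair_def bott_ray_def using assms by (intro sum.cong) auto
  also have "\<dots> = - m l + (\<Sum>j = 1..k. if l < j then m j * of_int (c l j) else 0)"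
    using assms by (simp add: sum.distrib sum.delta)
  also have "(\<Sum>j = 1..k. if l < j then m j * of_int (c l j) else 0)
     = (\<Sum>j\<in>{j\<in>{1..k}. l < j}. m j * of_int (c l j))"
    by (rule sum.inter_filter[symmetric]) simp
  also have "{j\<in>{1..k}. l < j} = {l<..k}" using assms by auto
  finally show ?thesis .
qed

function bm :: "(nat\<Rightarrow>nat\<Rightarrow>int) \<Rightarrow> nat \<Rightarrow> nat set \<Rightarrow> (nat \<Rightarrow> int) \<Rightarrow> nat \<Rightarrow> real" where
  "bm c k S b i = (if i \<in> S \<and> 1 \<le> i \<and> i \<le> k
     then of_int (b i) + (\<Sum>j\<in>{i<..k}. of_int (c i j) * bm c k S b j) else 0)"
  by auto
termination
  by (relation "measure (\<lambda>(c,k,S,b,i). k - i)") auto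

declare bm.simps[simp del]

lemma bm_nonneg:
  "(\<forall>i j. 1 \<le> i \<and> i < j \<and> j \<le> k \<longrightarrow> c i j \<ge> 0) \<Longrightarrow> (\<forall>i. b i \<ge> 0) \<Longrightarrow> bm c k S b i \<ge> 0"
proof (induction c k S b i rule: bm.induct)
  case (1 c k S b i)
  show ?case
  proof (cases "i \<in> S \<and> 1 \<le> i \<and> i \<le> k")
    case True
    have "(\<Sum>j\<in>{i<..k}. of_int (c i j) * bm c k S b j) \<ge> 0"
    proof (rule sum_nonneg)
      fix j assume j: "j \<in> {i<..k}"
      have "c i j \<ge> 0" using 1(2) True j by auto
      moreover have "bm c k S b j \<ge> 0" using 1 True j by blast
      ultimately show "of_int (c i j) * bm c k S b j \<ge> 0" by simp
    qed
    then show ?thesis using True 1(3) bm.simps[of c k S b i] by simp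
  next
    case False
    then show ?thesis using bm.simps[of c k S b i] by auto
  qed
qed

lemma pair_high0:
  assumes "1 \<le> l" "l \<le> k" "\<forall>i j. 1 \<le> i \<and> i < j \<and> j \<le> k \<longrightarrow> c i j = 0"
  shows "bott_pair c k m (k + l) = - m l"
proof -
  have "(\<Sum>j\<in>{l<..k}. m j * of_int (c l j)) = 0"
    using assms by (intro sum.neutral) auto
  then show ?thesis using pair_high[OF assms(1,2)] by simp
qed

lemma split_ray:
  assumes "(i::nat) \<in> {1..2*k}"
  obtains "1 \<le> i" "i \<le> k" | l where "i = k + l" "1 \<le> l" "l \<le> k"
proof (cases "i \<le> k")
  case True
  then show ?thesis using assms that(1) by auto
next
  case False
  then have "i = k + (i - k)" "1 \<le> i - k" "i - k \<le> k" using assms by auto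
  then show ?thesis using that(2) by blast
qed

lemma cone_mem:
  assumes "S \<subseteq> {1..k}"
  shows "i \<in> bott_cone k S \<longleftrightarrow> (1 \<le> i \<and> i \<le> k \<and> i \<notin> S) \<or> (\<exists>l\<in>S. i = k + l)"
  using assms unfolding bott_cone_def by auto

lemma ample_of_zero:
  assumes z: "\<forall>i j. 1 \<le> i \<and> i < j \<and> j \<le> k \<longrightarrow> c i j = 0"
    and big: "bott_big c k a"
  shows "bott_ample c k a"
proof -
  obtain m0 where m0: "\<forall>i\<in>{1..2*k}. bott_pair c k m0 i > - of_int (a i)"
    using big unfolding bott_big_def by blast
  have pos: "a l + a (k + l) > 0" if "1 \<le> l" "l \<le> k" for l
  proof -
    have "m0 l > - of_int (a l)" using m0[rule_format, of l] that pair_low[OF that, of c m0] by simp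
    moreover have "- m0 l > - of_int (a (k + l))"
      using m0[rule_format, of "k + l"] that pair_high0[OF that z, of m0] by simp
    ultimately show ?thesis by linarith
  qed
  show ?thesis unfolding bott_ample_def
  proof (intro allI impI)
    fix S assume S: "S \<subseteq> {1..k}"
    define m where "m = (\<lambda>j. if j \<in> S then real_of_int (a (k + j)) else - of_int (a j))"
    show "\<exists>m. (\<forall>i\<in>bott_cone k S. bott_pair c k m i = - of_int (a i)) \<and>
      (\<forall>i\<in>{1..2*k} - bott_cone k S. bott_pair c k m i > - of_int (a i))"
    proof (intro exI conjI ballI)
      fix i assume "i \<in> bott_cone k S"
      then consider "1 \<le> i" "i \<le> k" "i \<notin> S" | l where "l \<in> S" "i = k + l"
        using cone_mem[OF S] by blast
      then show "bott_pair c k m i = - of_int (a i)"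
      proof cases
        case 1 then show ?thesis using pair_low[of i k c m] by (simp add: m_def)
      next
        case 2
        then have "1 \<le> l" "l \<le> k" using S by auto
        then show ?thesis using pair_high0[OF _ _ z, of l m] 2 by (simp add: m_def)
      qed
    next
      fix i assume i: "i \<in> {1..2*k} - bott_cone k S"
      then have i1: "i \<in> {1..2*k}" and nc: "i \<notin> bott_cone k S" by auto
      from i1 show "bott_pair c k m i > - of_int (a i)"
      proof (cases rule: split_ray)
        case 1
        then have "i \<in> S" using nc cone_mem[OF S] by blast
        then show ?thesis using pair_low[OF 1, of c m] pos[OF 1] by (simp add: m_def)
      next
        case (2 l)
        then have "l \<notin> S" using nc cone_mem[OF S] by blast
        then show ?thesis using pair_high0[OF 2(2,3) z, of m] pos[OF 2(2,3)] 2(1)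
          by (simp add: m_def)
      qed
    qed
  qed
qed

lemma counterexample:
  assumes nn: "\<forall>i j. 1 \<le> i \<and> i < j \<and> j \<le> k \<longrightarrow> c i j \<ge> 0"
    and pq: "1 \<le> p" "p < q" "q \<le> k" "c p q \<noteq> 0"
  defines "a \<equiv> (\<lambda>i. if i \<le> k \<or> i = k + p then 0 else 1::int)"
  shows "bott_nef c k a" "bott_big c k a" "\<not> bott_ample c k a"
proof -
  define b where "b = (\<lambda>l::nat. if l = p then 0 else 1::int)"
  have alow: "a i = 0" if "i \<le> k" for i using that by (simp add: a_def)
  have ahigh: "a (k + l) = b l" if "1 \<le> l" for l using that by (simp add: a_def b_def)
  have bnn: "\<forall>l. b l \<ge> 0" by (simp add: b_def)
  show "bott_nef c k a" unfolding bott_nef_def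
  proof (intro allI impI)
    fix S assume S: "S \<subseteq> {1..k}"
    define m where "m = bm c k S b"
    have mnn: "m j \<ge> 0" for j unfolding m_def by (rule bm_nonneg[OF nn bnn])
    have m0: "m j = 0" if "j \<notin> S" for j using that bm.simps[of c k S b j] by (simp add: m_def)
    have mS: "m j = of_int (b j) + (\<Sum>i\<in>{j<..k}. m i * of_int (c j i))" if "j \<in> S" for j
      using that S bm.simps[of c k S b j] unfolding m_def by (auto simp: mult.commute)
    have sumnn: "(\<Sum>i\<in>{l<..k}. m i * of_int (c l i)) \<ge> 0" if "1 \<le> l" for l
      using that nn mnn by (intro sum_nonneg) auto
    show "\<exists>m. (\<forall>i\<in>bott_cone k S. bott_pair c k m i = - of_int (a i)) \<and>
      (\<forall>i\<in>{1..2*k}. bott_pair c k m i \<ge> - of_int (a i))"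
    proof (intro exI conjI ballI)
      fix i assume "i \<in> bott_cone k S"
      then consider "1 \<le> i" "i \<le> k" "i \<notin> S" | l where "l \<in> S" "i = k + l"
        using cone_mem[OF S] by blast
      then show "bott_pair c k m i = - of_int (a i)"
      proof cases
        case 1 then show ?thesis using pair_low[of i k c m] m0 alow by simp
      next
        case 2
        then have l: "1 \<le> l" "l \<le> k" using S by auto
        then show ?thesis using pair_high[OF l, of c m] 2 mS[OF 2(1)] ahigh[OF l(1)] by simp
      qed
    next
      fix i assume i1: "i \<in> {1..2*k}"
      then show "bott_pair c k m i \<ge> - of_int (a i)"
      proof (cases rule: split_ray)
        case 1
        then show ?thesis using pair_low[OF 1, of c m] mnn[of i] alow[OF 1(2)] by simp
      next
        case (2 l)
        show ?thesis
        proof (cases "l \<in> S")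
          case True
          then show ?thesis using pair_high[OF 2(2,3), of c m] 2 mS[OF True] ahigh[OF 2(2)] by simp
        next
          case False
          then show ?thesis using pair_high[OF 2(2,3), of c m] 2 m0[OF False] ahigh[OF 2(2)]
              sumnn[OF 2(2)] bnn[rule_format, of l] by simp
        qed
      qed
    qed
  qed
  show "bott_big c k a" unfolding bott_big_def
  proof (intro exI ballI)
    define m :: "nat \<Rightarrow> real" where "m = (\<lambda>j. if j = p then 1/4 else 1/2)"
    have mnn: "m j \<ge> 0" for j by (simp add: m_def)
    have sumnn: "(\<Sum>i\<in>{l<..k}. m i * of_int (c l i)) \<ge> 0" if "1 \<le> l" for l
      using that nn mnn by (intro sum_nonneg) auto
    fix i assume i1: "i \<in> {1..2*k}"
    then show "bott_pair c k m i > - of_int (a i)"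
    proof (cases rule: split_ray)
      case 1
      then show ?thesis using pair_low[OF 1, of c m] alow[OF 1(2)] by (simp add: m_def)
    next
      case (2 l)
      show ?thesis
      proof (cases "l = p")
        case True
        have "c p q \<ge> 1" using nn pq by force
        then have "m q * of_int (c p q) \<ge> 1/2" using pq by (simp add: m_def)
        moreover have "m q * of_int (c p q) \<le> (\<Sum>i\<in>{p<..k}. m i * of_int (c p i))"
          using pq nn mnn by (intro member_le_sum) auto
        ultimately show ?thesis using pair_high[OF 2(2,3), of c m] 2 True ahigh[OF 2(2)]
          by (simp add: m_def b_def)
      next
        case False
        then show ?thesis using pair_high[OF 2(2,3), of c m] 2 sumnn[OF 2(2)] ahigh[OF 2(2)]
          by (simp add: m_def b_def)
      qed
    qed
  qed
  show "\<not> bott_ample c k a"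
  proof
    assume "bott_ample c k a"
    then obtain m where m1: "\<forall>i\<in>bott_cone k {}. bott_pair c k m i = - of_int (a i)"
      and m2: "\<forall>i\<in>{1..2*k} - bott_cone k {}. bott_pair c k m i > - of_int (a i)"
      unfolding bott_ample_def by blast
    have cone: "bott_cone k {} = {1..k}" by (simp add: bott_cone_def)
    have mz: "m j = 0" if "1 \<le> j" "j \<le> k" for j
      using m1 cone pair_low[OF that, of c m] alow[OF that(2)] that by auto
    have "(\<Sum>i\<in>{p<..k}. m i * of_int (c p i)) = 0"
      using mz pq by (intro sum.neutral) auto
    then have "bott_pair c k m (k + p) = 0" using pair_high[of p k c m] pq mz[of p] by simp
    moreover have "k + p \<in> {1..2*k} - bott_cone k {}" using pq cone by auto
    ultimately have "bott_pair c k m (k + p) > - of_int (a (k + p))" "bott_pair c k m (k + p) = 0"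
      using m2 by blast+
    then show False by (simp add: a_def)
  qed
qed

theorem corollary3p10:
  fixes c :: "nat \<Rightarrow> nat \<Rightarrow> int" and k :: nat
  assumes "\<forall>i j. 1 \<le> i \<and> i < j \<and> j \<le> k \<longrightarrow> c i j \<ge> 0"
  shows "(\<forall>a. bott_nef c k a \<and> bott_big c k a \<longrightarrow> bott_ample c k a) \<longleftrightarrow>
         (\<forall>i j. 1 \<le> i \<and> i < j \<and> j \<le> k \<longrightarrow> c i j = 0)"
proof
  assume H: "\<forall>a. bott_nef c k a \<and> bott_big c k a \<longrightarrow> bott_ample c k a"
  show "\<forall>i j. 1 \<le> i \<and> i < j \<and> j \<le> k \<longrightarrow> c i j = 0"
  proof (intro allI impI, rule ccontr)
    fix i j assume "1 \<le> i \<and> i < j \<and> j \<le> k" "c i j \<noteq> 0"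
    then show False using counterexample[OF assms, of i j] H by blast
  qed
next
  assume "\<forall>i j. 1 \<le> i \<and> i < j \<and> j \<le> k \<longrightarrow> c i j = 0"
  then show "\<forall>a. bott_nef c k a \<and> bott_big c k a \<longrightarrow> bott_ample c k a"
    using ample_of_zero by blast
qed

end
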